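(* Let $\mathcal{A}$ be a parameter-preserving reduction algorithm (polynomial-time) for Max $k$-Weight SAT that preserves the set of variables, i.e. on input $(\Phi = (\mathcal{V}, \mathcal{C}), k)$ it produces $(\Phi' = (\mathcal{V}', \mathcal{C}'), k)$ with $\mathcal{V}' = \mathcal{V}$. Suppose there exist $\delta, h \ge 0$ and $s > 0$ (where $h, s$ may depend on $(\Phi, k)$) such that for every solution $Y \subseteq \mathcal{V}$ with $|Y| \le k$, $$|\mathrm{val}_{\Phi}(Y) - s \cdot \mathrm{val}_{\Phi'}(Y) - h| \le \delta \cdot \mathrm{OPT}_{\Phi, k}.$$ Then $(\mathcal{A}, \mathrm{Iden})$ is a $(1, 2\delta)$-APPA, where $\mathrm{Iden}$ is the solution-lifting algorithm that outputs its input solution unchanged.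
   Context: Max $k$-Weight SAT: input is a CNF formula $\Phi = (\mathcal{V}, \mathcal{C})$ with variable set $\mathcal{V}$ and a multiset $\mathcal{C}$ of clauses, plus a positive integer $k$. A solution is $Y \subseteq \mathcal{V}$ with $|Y| \le k$ (variables set to true); $\mathrm{val}_\Phi(Y)$ is the number of clauses (with multiplicity) satisfied by $Y$; $\mathrm{OPT}_{\Phi,k} = \max_{|Y|\le k}\mathrm{val}_\Phi(Y)$. A solution is $\beta$-approximate if its value is at least $\beta\cdot\mathrm{OPT}$. An $(\alpha,\gamma)$-APPA is a pair of polynomial-time algorithms $(\mathcal{A},\mathcal{B})$ where $\mathcal{A}$ maps an instance $(I,k)$ to an instance $(I',k')$ and $\mathcal{B}$ maps any $\beta$-approximate solution of $(I',k')$ to an $(\alpha\beta-\gamma)$-approximate solution of $(I,k)$. Parameter-preserving means $k'=k$. *)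

theory Defs
  imports Complex_Main "HOL-Library.Multiset"
begin

datatype 'v literal = Pos 'v | Neg 'v

fun lit_var :: "'v literal \<Rightarrow> 'v" where
  "lit_var (Pos x) = x" | "lit_var (Neg x) = x"

type_synonym 'v clause = "'v literal set"

type_synonym 'v cnf = "'v set \<times> 'v clause multiset"

definition vars :: "'v cnf \<Rightarrow> 'v set" where "vars \<Phi> = fst \<Phi>"
definition clauses :: "'v cnf \<Rightarrow> 'v clause multiset" where "clauses \<Phi> = snd \<Phi>"

definition wf_cnf :: "'v cnf \<Rightarrow> bool" where
  "wf_cnf \<Phi> \<longleftrightarrow> finite (vars \<Phi>) \<and>
     (\<forall>c \<in># clauses \<Phi>. finite c \<and> lit_var ` c \<subseteq> vars \<Phi>)"

fun lit_sat :: "'v set \<Rightarrow> 'v literal \<Rightarrow> bool" where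
  "lit_sat Y (Pos x) = (x \<in> Y)" | "lit_sat Y (Neg x) = (x \<notin> Y)"

definition clause_sat :: "'v set \<Rightarrow> 'v clause \<Rightarrow> bool" where
  "clause_sat Y c \<longleftrightarrow> (\<exists>l\<in>c. lit_sat Y l)"

definition val :: "'v cnf \<Rightarrow> 'v set \<Rightarrow> real" where
  "val \<Phi> Y = real (size (filter_mset (clause_sat Y) (clauses \<Phi>)))"

definition feasible :: "'v cnf \<Rightarrow> nat \<Rightarrow> 'v set \<Rightarrow> bool" where
  "feasible \<Phi> k Y \<longleftrightarrow> Y \<subseteq> vars \<Phi> \<and> card Y \<le> k"

definition OPT :: "'v cnf \<Rightarrow> nat \<Rightarrow> real" where
  "OPT \<Phi> k = Max (val \<Phi> ` {Y. feasible \<Phi> k Y})"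

definition approx_sol :: "'v cnf \<Rightarrow> nat \<Rightarrow> real \<Rightarrow> 'v set \<Rightarrow> bool" where
  "approx_sol \<Phi> k \<beta> Y \<longleftrightarrow> feasible \<Phi> k Y \<and> val \<Phi> Y \<ge> \<beta> * OPT \<Phi> k"

text \<open>(alpha,gamma)-APPA (approximation-preserving property, polynomial-time
  requirement omitted): for every well-formed instance (Phi,k) with k positive and every
  beta in [0,1], B maps any beta-approximate solution of A(Phi,k) to an
  (alpha*beta - gamma)-approximate solution of (Phi,k).\<close>
definition is_APPA ::
  "real \<Rightarrow> real \<Rightarrow> ('v cnf \<times> nat \<Rightarrow> 'w cnf \<times> nat)
     \<Rightarrow> ('v cnf \<times> nat \<Rightarrow> 'w set \<Rightarrow> 'v set) \<Rightarrow> bool" where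
  "is_APPA \<alpha> \<gamma> A B \<longleftrightarrow>
     (\<forall>\<Phi> k \<beta> Y. wf_cnf \<Phi> \<and> k > 0 \<and> 0 \<le> \<beta> \<and> \<beta> \<le> 1 \<and>
        approx_sol (fst (A (\<Phi>, k))) (snd (A (\<Phi>, k))) \<beta> Y \<longrightarrow>
        approx_sol \<Phi> k (\<alpha> * \<beta> - \<gamma>) (B (\<Phi>, k) Y))"

definition Iden :: "'v cnf \<times> nat \<Rightarrow> 'v set \<Rightarrow> 'v set" where
  "Iden I Y = Y"

end

theory Submission
  imports Defs
begin

lemma feas_finite: "finite (vars \<Phi>) \<Longrightarrow> finite {Y. feasible \<Phi> k Y}"
  unfolding feasible_def by (rule finite_subset[of _ "Pow (vars \<Phi>)"]) auto

lemma opt_ge: "finite (vars \<Phi>) \<Longrightarrow> feasible \<Phi> k Y \<Longrightarrow> val \<Phi> Y \<le> OPT \<Phi> k"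
  unfolding OPT_def by (rule Max_ge) (auto simp: feas_finite)

lemma opt_attained: "finite (vars \<Phi>) \<Longrightarrow> \<exists>Y. feasible \<Phi> k Y \<and> val \<Phi> Y = OPT \<Phi> k"
proof -
  assume f: "finite (vars \<Phi>)"
  have "feasible \<Phi> k {}" by (simp add: feasible_def)
  hence ne: "val \<Phi> ` {Y. feasible \<Phi> k Y} \<noteq> {}" by blast
  have "OPT \<Phi> k \<in> val \<Phi> ` {Y. feasible \<Phi> k Y}"
    unfolding OPT_def by (rule Max_in) (use f ne feas_finite[OF f] in auto)
  thus ?thesis by auto
qed

lemma val_nonneg: "val \<Phi> Y \<ge> 0" by (simp add: val_def)

theorem lemma2p3:
  fixes A :: "'v cnf \<times> nat \<Rightarrow> 'v cnf \<times> nat"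
    and \<delta> :: real
    and h s :: "'v cnf \<Rightarrow> nat \<Rightarrow> real"
  assumes preserve: "\<forall>\<Phi> k. wf_cnf \<Phi> \<and> k > 0 \<longrightarrow>
             wf_cnf (fst (A (\<Phi>, k))) \<and> snd (A (\<Phi>, k)) = k \<and> vars (fst (A (\<Phi>, k))) = vars \<Phi>"
    and delta: "\<delta> \<ge> 0"
    and hs: "\<forall>\<Phi> k. wf_cnf \<Phi> \<and> k > 0 \<longrightarrow> h \<Phi> k \<ge> 0 \<and> s \<Phi> k > 0"
    and close: "\<forall>\<Phi> k Y. wf_cnf \<Phi> \<and> k > 0 \<and> feasible \<Phi> k Y \<longrightarrow>
             \<bar>val \<Phi> Y - s \<Phi> k * val (fst (A (\<Phi>, k))) Y - h \<Phi> k\<bar> \<le> \<delta> * OPT \<Phi> k"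
  shows "is_APPA 1 (2 * \<delta>) A Iden"
  unfolding is_APPA_def Iden_def
proof (intro allI impI, elim conjE)
  fix \<Phi> :: "'v cnf" and k \<beta> Y
  assume wf: "wf_cnf \<Phi>" and k: "0 < k" and b0: "0 \<le> \<beta>" and b1: "\<beta> \<le> 1"
    and ap: "approx_sol (fst (A (\<Phi>, k))) (snd (A (\<Phi>, k))) \<beta> Y"
  define P where "P = fst (A (\<Phi>, k))"
  have pr: "snd (A (\<Phi>, k)) = k" "vars P = vars \<Phi>" using preserve wf k unfolding P_def by blast+
  have fin: "finite (vars \<Phi>)" using wf unfolding wf_cnf_def by blast
  have featP: "feasible P k Y" and vY: "val P Y \<ge> \<beta> * OPT P k"
    using ap pr unfolding approx_sol_def P_def by auto
  have feat: "feasible \<Phi> k Y" using featP pr by (simp add: feasible_def)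
  obtain Ys where Ys: "feasible \<Phi> k Ys" "val \<Phi> Ys = OPT \<Phi> k" using opt_attained[OF fin] by blast
  have featPs: "feasible P k Ys" using Ys(1) pr by (simp add: feasible_def)
  have "OPT P k \<ge> val P Ys" using opt_ge[OF _ featPs] pr fin by simp
  hence v1: "val P Y \<ge> \<beta> * val P Ys" using vY b0 by (meson mult_left_mono order_trans)
  have hs': "h \<Phi> k \<ge> 0" "s \<Phi> k > 0" using hs wf k by blast+
  have c1: "\<bar>val \<Phi> Y - s \<Phi> k * val P Y - h \<Phi> k\<bar> \<le> \<delta> * OPT \<Phi> k"
    using close wf k feat P_def by blast
  have c2: "\<bar>val \<Phi> Ys - s \<Phi> k * val P Ys - h \<Phi> k\<bar> \<le> \<delta> * OPT \<Phi> k"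
    using close wf k Ys(1) P_def by blast
  have O0: "OPT \<Phi> k \<ge> 0" using Ys(2) val_nonneg by metis
  have dO: "\<delta> * OPT \<Phi> k \<ge> 0" using delta O0 by simp
  have a: "s \<Phi> k * val P Y \<ge> \<beta> * (s \<Phi> k * val P Ys)"
    using v1 hs'(2) by (metis mult.left_commute mult_left_mono less_imp_le)
  have b: "h \<Phi> k \<ge> \<beta> * h \<Phi> k" using hs'(1) b1 b0 by (simp add: mult_left_le_one_le)
  have c: "\<beta> * (s \<Phi> k * val P Ys + h \<Phi> k) \<ge> \<beta> * (OPT \<Phi> k - \<delta> * OPT \<Phi> k)"
    using c2 Ys(2) b0 by (intro mult_left_mono) auto
  have d: "\<beta> * (\<delta> * OPT \<Phi> k) \<le> \<delta> * OPT \<Phi> k" using dO b0 b1 by (simp add: mult_left_le_one_le)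
  have "val \<Phi> Y \<ge> (1 * \<beta> - 2 * \<delta>) * OPT \<Phi> k"
    using c1 a b c d by (simp add: algebra_simps abs_le_iff)
  thus "approx_sol \<Phi> k (1 * \<beta> - 2 * \<delta>) Y" using feat by (simp add: approx_sol_def)
qed

end
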